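(* Let $\mathcal G(\mathcal V,\mathcal E)$ be the interference graph of a cellular network. In the uplink, let $\mathbf H_{uv}\in\mathbb C^{N\times M}$ be the channel from the transmitter of cell $v$ to the receiver of cell $u$ (zero if $(u,v)\notin\mathcal E$, $u\ne v$), and let $\pi$ be a decoding order. Suppose degrees of freedom $\{d_v\}_{v\in\mathcal V}$ are achieved in the uplink by one-shot linear interference alignment under the network interference cancellation (decoded-message passing) framework with order $\pi$, with transmit beamformers $\mathbf V_v\in\mathbb C^{M\times d_v}$ and receive beamformers $\mathbf U_u\in\mathbb C^{N\times d_u}$, i.e. $$\mathbf U_u^{\mathrm H}\mathbf H_{uv}\mathbf V_v=0\quad\text{for all }(u,v)\in\mathcal E\text{ with }u\prec_\pi v,\qquad \operatorname{rank}(\mathbf U_v^{\mathrm H}\mathbf H_{vv}\mathbf V_v)=d_v\ \ \forall v\in\mathcal V.$$ Consider the downlink of the same network with reciprocal channels $\overline{\mathbf H}_{uv}=\mathbf H_{vu}^{\mathrm H}\in\mathbb C^{M\times N}$ (from base-station $v$, with $N$ antennas, to the receiver of cell $u$, with $M$ antennas), the reversed encoding order $\overline\pi$ defined by $u\prec_{\overline\pi}v\iff v\prec_\pi u$, and beamformers $\overline{\mathbf V}_v=\mathbf U_v\in\mathbb C^{N\times d_v}$ (transmit) and $\overline{\mathbf U}_u=\mathbf V_u\in\mathbb C^{M\times d_u}$ (receive). Then $$\overline{\mathbf U}_u^{\mathrm H}\overline{\mathbf H}_{uv}\overline{\mathbf V}_v=0\quad\text{for all }(u,v)\in\mathcal E\text{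 with }u\prec_{\overline\pi}v,\qquad \operatorname{rank}(\overline{\mathbf U}_v^{\mathrm H}\overline{\mathbf H}_{vv}\overline{\mathbf V}_v)=d_v\ \ \forall v\in\mathcal V,$$ and consequently, under the successive dirty-paper coding framework with encoding order $\overline\pi$ (in which each base-station quantizes its DPC signal at rate $\log P$ per stream and shares it over the backhaul with later-encoding neighbors), every cell $u$ achieves $d_u$ degrees of freedom in the downlink.
   Context: Interference graph: an undirected graph $\mathcal G(\mathcal V,\mathcal E)$ whose vertices represent transmit–receive pairs (cells) and whose edges indicate interfering neighbors. A decoding/encoding order $\pi$ is a partial order $\prec_\pi$ on $\mathcal V$; cell $v$ decodes (encodes) before cell $u$ if $v\prec_\pi u$. In the uplink decoded-message passing framework, the receiver of cell $u$ can cancel interference from neighbors $v$ with $v\prec_\pi u$ (already decoded), so only interference from neighbors $v$ with $u\prec_\pi v$ must be aligned/zero-forced. In the downlink successive DPC framework with order $\overline\pi$, after DPC the receiver of cell $u$ sees only interference from neighbors $v$ with $u\prec_{\overline\pi}v$ plus Gaussian noise whose covariance is $\mathbf I+\sum_{v:\,v\prec_{\overline\pi}u}\overline{\mathbf H}_{uv}\overline{\mathbf V}_v\overline{\mathbf V}_v^{\mathrm H}\overline{\mathbf H}_{uv}^{\mathrm H}$, independent of $P$. Cell $u$ achieves $d_u$ degrees of freedom if its achievable rate $R_u(P)$ satisfies $\lim_{P\to\infty}R_u(P)/\log P=d_u$, where $P$ is the transmit power. *)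

theory Defs
  imports "Jordan_Normal_Form.Schur_Decomposition" "Jordan_Normal_Form.DL_Rank"
begin

abbreviation herm :: "complex mat \<Rightarrow> complex mat" where
  "herm A \<equiv> mat_adjoint A"

definition msum :: "nat \<Rightarrow> nat \<Rightarrow> 'v set \<Rightarrow> ('v \<Rightarrow> complex mat) \<Rightarrow> complex mat" where
  "msum r c S A = mat r c (\<lambda>(i,j). \<Sum>v\<in>S. A v $$ (i,j))"

definition strict_partial_order_on :: "'v set \<Rightarrow> ('v \<Rightarrow> 'v \<Rightarrow> bool) \<Rightarrow> bool" where
  "strict_partial_order_on V r \<longleftrightarrow>
     (\<forall>u\<in>V. \<not> r u u) \<and> (\<forall>u\<in>V. \<forall>v\<in>V. \<forall>w\<in>V. r u v \<and> r v w \<longrightarrow> r u w)"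

definition interference_graph :: "'v set \<Rightarrow> ('v \<Rightarrow> 'v \<Rightarrow> bool) \<Rightarrow> bool" where
  "interference_graph V E \<longleftrightarrow> finite V \<and>
     (\<forall>u v. E u v \<longrightarrow> u \<in> V \<and> v \<in> V) \<and> (\<forall>u v. E u v \<longrightarrow> E v u) \<and> (\<forall>u. \<not> E u u)"

(* Achievable rate of cell u in the downlink successive-DPC framework with encoding order
   precd (precd a b means a encodes before b), channels Hd u v (from BS v to receiver u,
   Mr receive antennas), transmit beamformers Tx, receive beamformers Rx, power P.
   After DPC, receiver u sees the desired signal sqrt P * Hd u u * Tx u * s_u, interference
   sqrt P * Hd u v * Tx v * s_v from neighbours v with precd u v, and Gaussian noise with
   covariance Q_u = I + sum_{v neighbour, precd v u} Hd u v Tx v Tx v^H Hd u v^H (independent of P).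
   With Gaussian inputs s_v ~ CN(0,I) and linear receive filter Rx u, treating the residual
   interference as noise, the rate is
   log det(Rx^H (Q_u + P*Interf + P*Signal) Rx) - log det(Rx^H (Q_u + P*Interf) Rx). *)
definition dl_dpc_rate ::
  "'v set \<Rightarrow> ('v \<Rightarrow> 'v \<Rightarrow> bool) \<Rightarrow> ('v \<Rightarrow> 'v \<Rightarrow> bool) \<Rightarrow> nat \<Rightarrow>
   ('v \<Rightarrow> 'v \<Rightarrow> complex mat) \<Rightarrow> ('v \<Rightarrow> complex mat) \<Rightarrow> ('v \<Rightarrow> complex mat) \<Rightarrow> 'v \<Rightarrow> real \<Rightarrow> real"
where
  "dl_dpc_rate V E precd Mr Hd Tx Rx u P =
    (let cov = (\<lambda>v. Hd u v * Tx v * herm (Tx v) * herm (Hd u v));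
         Q = 1\<^sub>m Mr + msum Mr Mr {v\<in>V. E u v \<and> precd v u} cov;
         Intf = msum Mr Mr {v\<in>V. E u v \<and> precd u v} cov;
         B = herm (Rx u) * (Q + complex_of_real P \<cdot>\<^sub>m Intf) * Rx u;
         S = herm (Rx u) * (complex_of_real P \<cdot>\<^sub>m cov u) * Rx u
     in log 2 (Re (det (B + S))) - log 2 (Re (det B)))"

definition achieves_dof :: "(real \<Rightarrow> real) \<Rightarrow> nat \<Rightarrow> bool" where
  "achieves_dof R d \<longleftrightarrow> ((\<lambda>P. R P / log 2 P) \<longlongrightarrow> real d) at_top"

end

theory Submission imports Defs "HOL-Real_Asymp.Real_Asymp" begin

lemma adj_carrier: "A \<in> carrier_mat n m \<Longrightarrow> mat_adjoint A \<in> carrier_mat m n"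
  unfolding mat_adjoint_def by auto

lemma adj_dims[simp]: "dim_row (mat_adjoint A) = dim_col A" "dim_col (mat_adjoint A) = dim_row A"
  unfolding mat_adjoint_def by auto

lemma adj_index[simp]: "i < dim_col A \<Longrightarrow> j < dim_row A \<Longrightarrow> mat_adjoint A $$ (i,j) = cnj (A $$ (j,i))"
  unfolding mat_adjoint_def by (auto simp: mat_of_rows_def)

lemma adj_adj[simp]: "mat_adjoint (mat_adjoint (A::complex mat)) = A"
  by (rule eq_matI) auto

lemma adj_mult: "A \<in> carrier_mat n k \<Longrightarrow> B \<in> carrier_mat k m \<Longrightarrow>
   mat_adjoint (A * (B::complex mat)) = mat_adjoint B * mat_adjoint A"
  by (rule eq_matI) (auto simp: scalar_prod_def cnj_sum intro!: sum.cong)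

lemma adj_zero[simp]: "mat_adjoint (0\<^sub>m n m :: complex mat) = 0\<^sub>m m n"
  by (rule eq_matI) auto

lemma det_cnj: "det (map_mat cnj A) = cnj (det (A::complex mat))"
  unfolding det_def by (simp add: cnj_sum cnj_prod sign_def)

lemma adj_transpose: "mat_adjoint (A::complex mat) = transpose_mat (map_mat cnj A)"
  by (rule eq_matI) auto

lemma det_adj: "A \<in> carrier_mat n n \<Longrightarrow> det (mat_adjoint (A::complex mat)) = cnj (det A)"
  by (simp add: adj_transpose det_transpose det_cnj)

lemma det_tends:
  fixes B S0 :: "complex mat"
  assumes B: "B \<in> carrier_mat n n" and S: "S0 \<in> carrier_mat n n"
  shows "((\<lambda>P::real. det (S0 + complex_of_real (1/P) \<cdot>\<^sub>m B)) \<longlongrightarrow> det S0) at_top"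
proof -
  have e: "det (S0 + complex_of_real (1/P) \<cdot>\<^sub>m B) = (\<Sum>p\<in>{p. p permutes {0..<n}}.
     signof p * (\<Prod>i = 0..<n. S0 $$ (i, p i) + complex_of_real (1/P) * B $$ (i, p i)))" for P
    using B S by (subst det_def'[of _ n]) (auto intro!: sum.cong prod.cong)
  have z: "((\<lambda>P::real. complex_of_real (1/P)) \<longlongrightarrow> 0) at_top"
  proof -
    have "((\<lambda>P::real. 1/P) \<longlongrightarrow> 0) at_top" by real_asymp
    from tendsto_of_real[OF this, where 'a=complex] show ?thesis by (simp del: of_real_divide)
  qed
  have "((\<lambda>P::real. (\<Sum>p\<in>{p. p permutes {0..<n}}.
     signof p * (\<Prod>i = 0..<n. S0 $$ (i, p i) + complex_of_real (1/P) * B $$ (i, p i))))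
     \<longlongrightarrow> (\<Sum>p\<in>{p. p permutes {0..<n}}.
     signof p * (\<Prod>i = 0..<n. S0 $$ (i, p i) + 0 * B $$ (i, p i)))) at_top"
    by (intro tendsto_intros z)
  then show ?thesis unfolding e using S by (simp add: det_def'[of _ n])
qed

lemma dof_lemma:
  fixes B S0 :: "complex mat"
  assumes B: "B \<in> carrier_mat n n" and S: "S0 \<in> carrier_mat n n" and pos: "Re (det S0) > 0"
  shows "achieves_dof (\<lambda>P. log 2 (Re (det (B + complex_of_real P \<cdot>\<^sub>m S0))) - log 2 (Re (det B))) n"
proof -
  define r where "r P = Re (det (S0 + complex_of_real (1/P) \<cdot>\<^sub>m B))" for P
  define K where "K = log 2 (Re (det B))"
  have rt: "(r \<longlongrightarrow> Re (det S0)) at_top"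
    unfolding r_def by (intro tendsto_intros det_tends[OF B S])
  have ev1: "eventually (\<lambda>P. r P > 0) at_top"
    using order_tendstoD(1)[OF rt pos] .
  have eq: "Re (det (B + complex_of_real P \<cdot>\<^sub>m S0)) = P ^ n * r P" if P: "P > 0" for P
  proof -
    have "B + complex_of_real P \<cdot>\<^sub>m S0 = complex_of_real P \<cdot>\<^sub>m (S0 + complex_of_real (1/P) \<cdot>\<^sub>m B)"
      using B S P by (intro eq_matI) (auto simp: algebra_simps)
    then have "det (B + complex_of_real P \<cdot>\<^sub>m S0) = complex_of_real P ^ n * det (S0 + complex_of_real (1/P) \<cdot>\<^sub>m B)"
      using S B by simp
    then show ?thesis unfolding r_def by (simp flip: of_real_power)
  qed
  have lt: "filterlim (\<lambda>P::real. log 2 P) at_top at_top" by real_asymp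
  have l2: "((\<lambda>P. log 2 (r P) - K) \<longlongrightarrow> log 2 (Re (det S0)) - K) at_top"
    by (intro tendsto_intros rt) (use pos in auto)
  have z: "((\<lambda>P. (log 2 (r P) - K) / log 2 P) \<longlongrightarrow> 0) at_top"
    by (rule tendsto_divide_0[OF l2]) (rule filterlim_at_top_imp_at_infinity[OF lt])
  have lim: "((\<lambda>P. real n + (log 2 (r P) - K) / log 2 P) \<longlongrightarrow> real n + 0) at_top"
    by (intro tendsto_intros z)
  have ev: "eventually (\<lambda>P. real n + (log 2 (r P) - K) / log 2 P =
     (log 2 (Re (det (B + complex_of_real P \<cdot>\<^sub>m S0))) - log 2 (Re (det B))) / log 2 P) at_top"
    using ev1 eventually_gt_at_top[of 1]
  proof eventually_elim
    case (elim P)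
    then have "log 2 P > 0" by simp
    have "log 2 (P ^ n * r P) = real n * log 2 P + log 2 (r P)"
      using elim by (simp add: log_mult log_nat_power)
    moreover have lp: "log 2 P \<noteq> 0" using \<open>log 2 P > 0\<close> by simp
    ultimately show ?case using eq[of P] elim unfolding K_def
      by (simp add: diff_divide_distrib add_divide_distrib lp mult.commute)
  qed
  show ?thesis unfolding achieves_dof_def using tendsto_cong[OF ev] lim by simp
qed

lemma adj3: "A \<in> carrier_mat n k \<Longrightarrow> B \<in> carrier_mat k l \<Longrightarrow> C \<in> carrier_mat l m \<Longrightarrow>
  mat_adjoint (A * B * (C::complex mat)) = mat_adjoint C * mat_adjoint B * mat_adjoint A"
  apply (subst adj_mult[of _ n l], auto)
  apply (subst adj_mult[of _ n k], auto)
  apply (rule assoc_mult_mat[symmetric, of _ m l _ k _ n])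
  apply (auto intro: adj_carrier)
  done

lemma chain4:
  assumes a: "(a::'a::comm_ring_1 mat) \<in> carrier_mat n1 n2" and b: "b \<in> carrier_mat n2 n3"
    and c: "c \<in> carrier_mat n3 n4" and e: "e \<in> carrier_mat n4 n5" and R: "R \<in> carrier_mat n5 n6"
  shows "(a*b*c*e)*R = (a*b)*(c*e*R)"
proof -
  have ab: "a*b \<in> carrier_mat n1 n3" using a b by auto
  have abc: "a*b*c \<in> carrier_mat n1 n4" using ab c by auto
  have eR: "e*R \<in> carrier_mat n4 n6" using e R by auto
  have "(a*b*c*e)*R = (a*b*c)*(e*R)" by (rule assoc_mult_mat[OF abc e R])
  also have "\<dots> = (a*b)*(c*(e*R))" by (rule assoc_mult_mat[OF ab c eR])
  also have "c*(e*R) = c*e*R" by (rule assoc_mult_mat[OF c e R, symmetric])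
  finally show ?thesis .
qed

lemma chain5:
  assumes a: "(a::'a::comm_ring_1 mat) \<in> carrier_mat n1 n2" and b: "b \<in> carrier_mat n2 n3"
    and c: "c \<in> carrier_mat n3 n4" and e: "e \<in> carrier_mat n4 n5" and f: "f \<in> carrier_mat n5 n6"
    and R: "R \<in> carrier_mat n6 n7"
  shows "a*(b*c*e*f)*R = (a*b*c)*(e*f*R)"
proof -
  have bcef: "b*c*e*f \<in> carrier_mat n2 n6" using b c e f by auto
  have bc: "b*c \<in> carrier_mat n2 n4" using b c by auto
  have efR: "e*f*R \<in> carrier_mat n4 n7" using e f R by auto
  have "a*(b*c*e*f)*R = a*((b*c*e*f)*R)" by (rule assoc_mult_mat[OF a bcef R])
  also have "(b*c*e*f)*R = (b*c)*(e*f*R)" by (rule chain4[OF b c e f R])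
  also have "a*((b*c)*(e*f*R)) = (a*(b*c))*(e*f*R)" by (rule assoc_mult_mat[OF a bc efR, symmetric])
  also have "a*(b*c) = a*b*c" by (rule assoc_mult_mat[OF a b c, symmetric])
  finally show ?thesis .
qed

lemma msum_dims[simp]: "dim_row (msum r c S A) = r" "dim_col (msum r c S A) = c"
  unfolding msum_def by auto

lemma msum_carrier[simp]: "msum r c S A \<in> carrier_mat r c"
  unfolding msum_def by auto

lemma msum_mult_zero:
  assumes fin: "finite S" and A: "\<And>v. v \<in> S \<Longrightarrow> A v \<in> carrier_mat m m"
    and R: "R \<in> carrier_mat m c" and z: "\<And>v. v \<in> S \<Longrightarrow> A v * R = 0\<^sub>m m c"
  shows "msum m m S A * R = 0\<^sub>m m c"
proof (rule eq_matI)
  fix i j assume i: "i < dim_row (0\<^sub>m m c :: complex mat)" and j: "j < dim_col (0\<^sub>m m c :: complex mat)"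
  have "(msum m m S A * R) $$ (i,j) = (\<Sum>k<m. (\<Sum>v\<in>S. A v $$ (i,k)) * R $$ (k,j))"
    using i j R by (auto simp: msum_def scalar_prod_def atLeast0LessThan intro!: sum.cong)
  also have "\<dots> = (\<Sum>v\<in>S. \<Sum>k<m. A v $$ (i,k) * R $$ (k,j))"
    by (simp add: sum_distrib_right sum.swap[of _ S])
  also have "\<dots> = (\<Sum>v\<in>S. (A v * R) $$ (i,j))"
  proof (rule sum.cong)
    fix x assume "x \<in> S"
    with A have Ax: "A x \<in> carrier_mat m m" by auto
    show "(\<Sum>k<m. A x $$ (i,k) * R $$ (k,j)) = (A x * R) $$ (i,j)"
      using i j R Ax by (auto simp: scalar_prod_def atLeast0LessThan intro!: sum.cong)
  qed simp
  also have "\<dots> = 0" using z i j by simp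
  finally show "(msum m m S A * R) $$ (i,j) = 0\<^sub>m m c $$ (i,j)" using i j by simp
qed (use R in auto)

theorem theorem1:
  fixes V :: "'v set" and E :: "'v \<Rightarrow> 'v \<Rightarrow> bool" and prec :: "'v \<Rightarrow> 'v \<Rightarrow> bool"
    and M N :: nat and d :: "'v \<Rightarrow> nat"
    and H :: "'v \<Rightarrow> 'v \<Rightarrow> complex mat"
    and Vb Ub :: "'v \<Rightarrow> complex mat"
  assumes graph: "interference_graph V E"
    and order: "strict_partial_order_on V prec"
    and H_dim: "\<And>u v. u \<in> V \<Longrightarrow> v \<in> V \<Longrightarrow> H u v \<in> carrier_mat N M"
    and H_nonedge: "\<And>u v. u \<in> V \<Longrightarrow> v \<in> V \<Longrightarrow> u \<noteq> v \<Longrightarrow> \<not> E u v \<Longrightarrow> H u v = 0\<^sub>m N M"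
    and V_dim: "\<And>v. v \<in> V \<Longrightarrow> Vb v \<in> carrier_mat M (d v)"
    and U_dim: "\<And>u. u \<in> V \<Longrightarrow> Ub u \<in> carrier_mat N (d u)"
    and ul_zf: "\<And>u v. u \<in> V \<Longrightarrow> v \<in> V \<Longrightarrow> E u v \<Longrightarrow> prec u v \<Longrightarrow>
                  herm (Ub u) * H u v * Vb v = 0\<^sub>m (d u) (d v)"
    and ul_rank: "\<And>v. v \<in> V \<Longrightarrow> vec_space.rank (d v) (herm (Ub v) * H v v * Vb v) = d v"
  shows "(\<forall>u\<in>V. \<forall>v\<in>V. E u v \<and> prec v u \<longrightarrow>
            herm (Vb u) * herm (H v u) * Ub v = 0\<^sub>m (d u) (d v))
       \<and> (\<forall>v\<in>V. vec_space.rank (d v) (herm (Vb v) * herm (H v v) * Ub v) = d v)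
       \<and> (\<forall>u\<in>V. achieves_dof
              (dl_dpc_rate V E (\<lambda>a b. prec b a) M (\<lambda>a b. herm (H b a)) Ub Vb u) (d u))"
proof -
  have sym: "\<And>u v. E u v \<Longrightarrow> E v u" and fin: "finite V"
    using graph unfolding interference_graph_def by auto
  have P1: "herm (Vb u) * herm (H v u) * Ub v = 0\<^sub>m (d u) (d v)"
    if u: "u \<in> V" and v: "v \<in> V" and e: "E u v" and p: "prec v u" for u v
  proof -
    have "herm (herm (Ub v) * H v u * Vb u) = herm (Vb u) * herm (H v u) * Ub v"
      using H_dim[OF v u] V_dim[OF u] U_dim[OF v]
      by (subst adj3[of "herm (Ub v)" "d v" N "H v u" M "Vb u" "d u"]) (auto intro: adj_carrier)
    then show ?thesis using ul_zf[OF v u sym[OF e] p] by simp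
  qed
  have detG: "det (herm (Vb v) * herm (H v v) * Ub v) \<noteq> 0" and
       Gc: "herm (Vb v) * herm (H v v) * Ub v \<in> carrier_mat (d v) (d v)" if v: "v \<in> V" for v
  proof -
    have Kc: "herm (Ub v) * H v v * Vb v \<in> carrier_mat (d v) (d v)"
      using H_dim[OF v v] V_dim[OF v] U_dim[OF v] by (auto intro!: mult_carrier_mat adj_carrier)
    have "herm (herm (Ub v) * H v v * Vb v) = herm (Vb v) * herm (H v v) * Ub v"
      using H_dim[OF v v] V_dim[OF v] U_dim[OF v]
      by (subst adj3[of "herm (Ub v)" "d v" N "H v v" M "Vb v" "d v"]) (auto intro: adj_carrier)
    moreover have "det (herm (Ub v) * H v v * Vb v) \<noteq> 0"
      using vec_space.det_rank_iff[OF Kc] ul_rank[OF v] by simp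
    ultimately show "det (herm (Vb v) * herm (H v v) * Ub v) \<noteq> 0"
      using det_adj[OF Kc] by (metis complex_cnj_zero_iff)
    show "herm (Vb v) * herm (H v v) * Ub v \<in> carrier_mat (d v) (d v)"
      using H_dim[OF v v] V_dim[OF v] U_dim[OF v] by (auto intro!: mult_carrier_mat adj_carrier)
  qed
  have P2: "vec_space.rank (d v) (herm (Vb v) * herm (H v v) * Ub v) = d v" if v: "v \<in> V" for v
    using vec_space.det_rank_iff[OF Gc[OF v]] detG[OF v] by simp
  have P3: "achieves_dof (dl_dpc_rate V E (\<lambda>a b. prec b a) M (\<lambda>a b. herm (H b a)) Ub Vb u) (d u)"
    if u: "u \<in> V" for u
  proof -
    define R where "R = Vb u"
    define n where "n = d u"
    define cov where "cov = (\<lambda>v. herm (H v u) * Ub v * herm (Ub v) * herm (herm (H v u)))"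
    define Q where "Q = 1\<^sub>m M + msum M M {v\<in>V. E u v \<and> prec u v} cov"
    define I where "I = msum M M {v\<in>V. E u v \<and> prec v u} cov"
    define G where "G = herm (Vb u) * herm (H u u) * Ub u"
    define B0 where "B0 = herm R * Q * R"
    define S0 where "S0 = G * herm G"
    have Rc: "R \<in> carrier_mat M n" using V_dim[OF u] unfolding R_def n_def .
    have Qc: "Q \<in> carrier_mat M M" unfolding Q_def by simp
    have Ic: "I \<in> carrier_mat M M" unfolding I_def by simp
    have covc: "cov v \<in> carrier_mat M M" if v: "v \<in> V" for v
      using H_dim[OF v u] U_dim[OF v] unfolding cov_def
      by (auto intro!: mult_carrier_mat adj_carrier)
    have IR: "I * R = 0\<^sub>m M n"
      unfolding I_def
    proof (rule msum_mult_zero[OF _ _ Rc])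
      show "finite {v \<in> V. E u v \<and> prec v u}" using fin by simp
      show "cov v \<in> carrier_mat M M" if "v \<in> {v \<in> V. E u v \<and> prec v u}" for v
        using covc that by simp
      fix v assume "v \<in> {v \<in> V. E u v \<and> prec v u}"
      then have v: "v \<in> V" and e: "E u v" and p: "prec v u" by auto
      have a: "herm (H v u) \<in> carrier_mat M N" "Ub v \<in> carrier_mat N (d v)"
        "herm (Ub v) \<in> carrier_mat (d v) N" "herm (herm (H v u)) \<in> carrier_mat N M"
        using H_dim[OF v u] U_dim[OF v] by (auto intro!: adj_carrier)
      have "cov v * R = (herm (H v u) * Ub v) * (herm (Ub v) * H v u * R)"
        unfolding cov_def adj_adj by (rule chain4[OF a(1,2,3) _ Rc]) (use H_dim[OF v u] in simp)
      also have "herm (Ub v) * H v u * R = 0\<^sub>m (d v) n"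
        using ul_zf[OF v u sym[OF e] p] unfolding R_def n_def .
      finally show "cov v * R = 0\<^sub>m M n" using a by simp
    qed
    have Gc': "G \<in> carrier_mat n n" using Gc[OF u] unfolding G_def n_def .
    have S0c: "S0 \<in> carrier_mat n n" unfolding S0_def using Gc' by (auto intro!: adj_carrier)
    have B0c: "B0 \<in> carrier_mat n n" unfolding B0_def using Rc Qc by (auto intro!: adj_carrier)
    have covS: "herm R * cov u * R = S0"
    proof -
      have a: "herm (H u u) \<in> carrier_mat M N" "Ub u \<in> carrier_mat N n"
        "herm (Ub u) \<in> carrier_mat n N" "H u u \<in> carrier_mat N M" "herm R \<in> carrier_mat n M"
        using H_dim[OF u u] U_dim[OF u] Rc by (auto intro!: adj_carrier simp: n_def)
      have hG: "herm G = herm (Ub u) * H u u * R"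
        unfolding G_def R_def[symmetric] using a Rc
        by (subst adj3[of "herm R" n M "herm (H u u)" N "Ub u" n]) auto
      show ?thesis unfolding S0_def hG unfolding G_def R_def[symmetric] cov_def adj_adj
        by (rule chain5[OF a(5,1,2,3,4) Rc])
    qed
    have rate: "dl_dpc_rate V E (\<lambda>a b. prec b a) M (\<lambda>a b. herm (H b a)) Ub Vb u =
       (\<lambda>P. log 2 (Re (det (B0 + complex_of_real P \<cdot>\<^sub>m S0))) - log 2 (Re (det B0)))"
    proof
      fix P
      have hR: "herm R \<in> carrier_mat n M" using Rc by (auto intro!: adj_carrier)
      have "herm R * (Q + complex_of_real P \<cdot>\<^sub>m I) * R = herm R * (Q * R + complex_of_real P \<cdot>\<^sub>m (I * R))"
        using hR Qc Ic Rc
        by (simp add: assoc_mult_mat[of _ n M _ M _ n] add_mult_distrib_mat[of _ M M _ _ n] mult_smult_assoc_mat[of _ M M _ n])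
      also have "\<dots> = B0" unfolding IR B0_def using hR Qc Rc
        by (simp add: assoc_mult_mat[of _ n M _ M _ n])
      finally have b: "herm R * (Q + complex_of_real P \<cdot>\<^sub>m I) * R = B0" .
      have s: "herm R * (complex_of_real P \<cdot>\<^sub>m cov u) * R = complex_of_real P \<cdot>\<^sub>m S0"
        using hR covc[OF u] Rc covS[symmetric]
        by (simp add: mult_smult_distrib[of _ n M _ M] mult_smult_assoc_mat[of _ n M _ n]
              del: assoc_mult_mat)
      show "dl_dpc_rate V E (\<lambda>a b. prec b a) M (\<lambda>a b. herm (H b a)) Ub Vb u P =
         log 2 (Re (det (B0 + complex_of_real P \<cdot>\<^sub>m S0))) - log 2 (Re (det B0))"
        unfolding dl_dpc_rate_def Let_def
        using b s unfolding Q_def I_def cov_def R_def by simp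
    qed
    have pos: "Re (det S0) > 0"
    proof -
      have "det S0 = det G * cnj (det G)"
        unfolding S0_def using Gc' by (simp add: det_mult[OF Gc'] adj_carrier det_adj)
      also have "\<dots> = complex_of_real ((cmod (det G))^2)" by (simp only: complex_norm_square of_real_power[symmetric])
      finally show ?thesis using detG[OF u] unfolding G_def by simp
    qed
    show ?thesis unfolding rate n_def[symmetric] by (rule dof_lemma[OF B0c S0c pos])
  qed
  show ?thesis using P1 P2 P3 by blast
qed

end
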